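(* Let $L$ be an infinite set and consider the edgeless cube $Q_L$. In every legal configuration accessible from $f_{\mathrm{solved}}$, every non-center cluster contains exactly four cells of each of the six colors.
   Context: Let $L$ be an infinite set, $-L=\{-r:r\in L\}$ a disjoint copy of $L$, and $0$ a new element; $L^\dagger=-L\cup\{0\}\cup L$ with $-(-r)=r$, $-0=0$. Adjoin $\pm\infty$ with $-(+\infty)=-\infty$ and set $\bar L^\dagger=L^\dagger\cup\{\pm\infty\}$. Points of $U=(\bar L^\dagger)^3$ have coordinates $x,y,z$. The edgeless cube $Q_L$ is the set of cells: points of $U$ with exactly one coordinate in $\{\pm\infty\}$. For $i\in\{x,y,z\}$, $\alpha\in\bar L^\dagger$, the quarter-turn twist $T_{i,\alpha}$ is the permutation of cells fixing every cell $p$ with $p_i\ne\alpha$ and acting on the others by $T_{x,\alpha}(\alpha,y,z)=(\alpha,-z,y)$, $T_{y,\alpha}(x,\alpha,z)=(z,\alpha,-x)$, $T_{z,\alpha}(x,y,\alpha)=(-y,x,\alpha)$. Basic twists are $T,T^2,T^3$ for quarter-turn twists $T$. A basic sequence is a sequence $\langle\sigma_\eta:\eta<\theta\rangle$ of basic twists of ordinal length $\theta$. A configuration is a map $f$ from cells to the six colors red, white, green, orange, yellow, blue together with a special value NaC; it is legal if it never takes value NaC. The solved configuration $f_{\mathrm{solved}}$ colors a cell red, blue, white, orange, green, yellow according as $x=+\infty$, $y=+\infty$, $z=+\infty$, $x=-\infty$, $y=-\infty$, $z=-\infty$. A twist $\sigma$ acts by $(\sigma f)(c)=f(\sigma^{-1}c)$.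 Applying $\langle\sigma_\eta:\eta<\theta\rangle$ to $f_0$ produces $f_{\eta+1}=\sigma_\eta f_\eta$, and for limit $\lambda\le\theta$, $f_\lambda(c)$ is the eventually constant value of $f_\eta(c)$ ($\eta<\lambda$) if it exists and NaC otherwise; $f_\theta$ is the terminal configuration. $f$ is accessible from $f_0$ if it is the terminal configuration of some basic sequence applied to $f_0$. The cluster of a cell is its orbit under the group generated by all quarter-turn twists; the six center cells (two coordinates equal to $0$) form the center cluster, and all other clusters (non-center) have 24 cells. *)

theory Defs
  imports Main
begin

(* Elements of \<bar>L\<dagger> = -L \<union> {0} \<union> L \<union> {+inf,-inf}, where L is the type 'a *)
datatype 'a coord = Neg 'a | Zero | Pos 'a | PInf | MInf

fun neg :: "'a coord \<Rightarrow> 'a coord" where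
  "neg (Neg r) = Pos r"
| "neg (Pos r) = Neg r"
| "neg Zero = Zero"
| "neg PInf = MInf"
| "neg MInf = PInf"

type_synonym 'a point = "'a coord \<times> 'a coord \<times> 'a coord"

definition is_inf :: "'a coord \<Rightarrow> bool" where
  "is_inf a \<longleftrightarrow> a = PInf \<or> a = MInf"

definition cells :: "'a point set" where
  "cells = {(x, y, z). (is_inf x \<and> \<not> is_inf y \<and> \<not> is_inf z)
                      \<or> (\<not> is_inf x \<and> is_inf y \<and> \<not> is_inf z)
                      \<or> (\<not> is_inf x \<and> \<not> is_inf y \<and> is_inf z)}"

datatype axis = AX | AY | AZ

(* quarter-turn twist T_{i,alpha} (acting on all points; it permutes the cells) *)
fun qturn :: "axis \<Rightarrow> 'a coord \<Rightarrow> 'a point \<Rightarrow> 'a point" where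
  "qturn AX \<alpha> (x, y, z) = (if x = \<alpha> then (x, neg z, y) else (x, y, z))"
| "qturn AY \<alpha> (x, y, z) = (if y = \<alpha> then (z, y, neg x) else (x, y, z))"
| "qturn AZ \<alpha> (x, y, z) = (if z = \<alpha> then (neg y, x, z) else (x, y, z))"

definition basic_twists :: "('a point \<Rightarrow> 'a point) set" where
  "basic_twists = {qturn i \<alpha> ^^ k | i \<alpha> k. k \<in> {1, 2, 3}}"

datatype color = Red | White | Green | Orange | Yellow | Blue

(* a configuration; None plays the role of NaC *)
type_synonym 'a config = "'a point \<Rightarrow> color option"

definition legal :: "'a config \<Rightarrow> bool" where
  "legal f \<longleftrightarrow> (\<forall>c\<in>cells. f c \<noteq> None)"

definition f_solved :: "'a config" where
  "f_solved = (\<lambda>(x, y, z).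
     if x = PInf then Some Red else if y = PInf then Some Blue
     else if z = PInf then Some White else if x = MInf then Some Orange
     else if y = MInf then Some Green else if z = MInf then Some Yellow
     else None)"

definition act :: "('a point \<Rightarrow> 'a point) \<Rightarrow> 'a config \<Rightarrow> 'a config" where
  "act \<sigma> f = (\<lambda>c. f (inv \<sigma> c))"

(* An ordinal length theta is represented by an element \<theta> of a
   well-ordered type 'o: the indices eta < theta are the elements of 'o below \<theta>,
   and F eta is the configuration f_eta for eta \<le> theta. *)
definition is_run :: "'a config \<Rightarrow> ('o::wellorder \<Rightarrow> 'a point \<Rightarrow> 'a point) \<Rightarrow> 'o
                      \<Rightarrow> ('o \<Rightarrow> 'a config) \<Rightarrow> bool" where
  "is_run f0 \<sigma> \<theta> F \<longleftrightarrow>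
     (\<forall>\<eta><\<theta>. \<sigma> \<eta> \<in> basic_twists)
   \<and> (\<forall>\<eta>\<le>\<theta>. (\<forall>\<xi>. \<not> \<xi> < \<eta>) \<longrightarrow> F \<eta> = f0)
   \<and> (\<forall>\<xi> \<eta>. \<xi> < \<eta> \<and> \<eta> \<le> \<theta> \<and> (\<forall>\<zeta>. \<not> (\<xi> < \<zeta> \<and> \<zeta> < \<eta>))
              \<longrightarrow> F \<eta> = act (\<sigma> \<xi>) (F \<xi>))
   \<and> (\<forall>\<eta>\<le>\<theta>. (\<exists>\<xi>. \<xi> < \<eta>) \<and> (\<forall>\<xi><\<eta>. \<exists>\<zeta>. \<xi> < \<zeta> \<and> \<zeta> < \<eta>) \<longrightarrow>
        (\<forall>c. F \<eta> c =
           (if \<exists>v. \<exists>\<xi><\<eta>. \<forall>\<zeta>. \<xi> \<le> \<zeta> \<and> \<zeta> < \<eta> \<longrightarrow> F \<zeta> c = v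
            then (THE v. \<exists>\<xi><\<eta>. \<forall>\<zeta>. \<xi> \<le> \<zeta> \<and> \<zeta> < \<eta> \<longrightarrow> F \<zeta> c = v)
            else None)))"

definition accessible_via :: "('o::wellorder \<Rightarrow> 'a point \<Rightarrow> 'a point) \<Rightarrow> 'o
                              \<Rightarrow> 'a config \<Rightarrow> 'a config \<Rightarrow> bool" where
  "accessible_via \<sigma> \<theta> f0 f \<longleftrightarrow> (\<exists>F. is_run f0 \<sigma> \<theta> F \<and> (\<forall>c\<in>cells. F \<theta> c = f c))"

inductive_set cluster :: "'a point \<Rightarrow> 'a point set" for c where
  base: "c \<in> cluster c"
| step: "d \<in> cluster c \<Longrightarrow> qturn i \<alpha> d \<in> cluster c"
| step_inv: "d \<in> cluster c \<Longrightarrow> inv (qturn i \<alpha>) d \<in> cluster c"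

definition center_cell :: "'a point \<Rightarrow> bool" where
  "center_cell c \<longleftrightarrow> (case c of (x, y, z) \<Rightarrow>
      (x = Zero \<and> y = Zero) \<or> (x = Zero \<and> z = Zero) \<or> (y = Zero \<and> z = Zero))"

end

theory Submission
  imports Defs
begin

fun rot :: "axis \<Rightarrow> 'a point \<Rightarrow> 'a point" where
  "rot AX (x, y, z) = (x, neg z, y)"
| "rot AY (x, y, z) = (z, y, neg x)"
| "rot AZ (x, y, z) = (neg y, x, z)"

fun crd :: "axis \<Rightarrow> 'a point \<Rightarrow> 'a coord" where
  "crd AX (x, y, z) = x"
| "crd AY (x, y, z) = y"
| "crd AZ (x, y, z) = z"

definition app :: "axis list \<Rightarrow> 'a point \<Rightarrow> 'a point" where
  "app w p = foldr rot w p"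

definition words :: "axis list list" where
  "words = [[], [AX], [AY], [AZ], [AX, AX], [AY, AX], [AZ, AX], [AY, AY], [AZ, AY], [AX, AZ], [AZ, AZ], [AX, AX, AX], [AY, AX, AX], [AZ, AX, AX], [AY, AY, AX], [AX, AZ, AX], [AZ, AZ, AX], [AY, AY, AY], [AZ, AY, AY], [AZ, AZ, AZ], [AZ, AX, AX, AX], [AX, AZ, AX, AX], [AZ, AY, AY, AX], [AZ, AZ, AZ, AX]]"

definition orbl :: "'a point \<Rightarrow> 'a point list" where
  "orbl c = map (\<lambda>w. app w c) words"

lemma neg_neg[simp]: "neg (neg a) = a"
  by (cases a) auto

lemma neg_inj[simp]: "(neg a = neg b) = (a = b)"
  by (metis neg_neg)

lemma neg_simps[simp]:
  "(neg a = PInf) = (a = MInf)" "(neg a = MInf) = (a = PInf)" "(neg a = Zero) = (a = Zero)"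
  "(PInf = neg a) = (a = MInf)" "(MInf = neg a) = (a = PInf)" "(Zero = neg a) = (a = Zero)"
  "(neg a = a) = (a = Zero)" "(a = neg a) = (a = Zero)"
  by (cases a; auto)+

lemma qturn_rot: "qturn i \<alpha> p = (if crd i p = \<alpha> then rot i p else p)"
  by (cases i; cases p; auto)

lemma crd_rot[simp]: "crd i (rot i p) = crd i p"
  by (cases i; cases p; auto)

lemma rot4: "rot i (rot i (rot i (rot i p))) = p"
  by (cases i; cases p; auto)

lemma inj_qturn: "inj (qturn i \<alpha>)"
proof (rule injI)
  fix p q assume "qturn i \<alpha> p = qturn i \<alpha> q"
  then show "p = q"
    by (cases i; cases p; cases q; auto split: if_splits)
qed

lemma inv_qturn: "inv (qturn i \<alpha>) p = (if crd i p = \<alpha> then rot i (rot i (rot i p)) else p)"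
proof (cases "crd i p = \<alpha>")
  case True
  have "qturn i \<alpha> (rot i (rot i (rot i p))) = p" using True by (simp add: qturn_rot rot4)
  then show ?thesis using True inj_qturn by (metis inv_f_eq)
next
  case False
  have "qturn i \<alpha> p = p" using False by (simp add: qturn_rot)
  then show ?thesis using False inj_qturn by (metis inv_f_eq)
qed

lemma orbl_closed_all: "\<forall>p\<in>set (orbl (x,y,z)). rot i p \<in> set (orbl (x,y,z))"
  by (cases i) (simp_all add: orbl_def words_def app_def)

lemma orbl_closed: "p \<in> set (orbl c) \<Longrightarrow> rot i p \<in> set (orbl c)"
  using orbl_closed_all[of "fst c" "fst (snd c)" "snd (snd c)" i] by auto

lemma orbl_base: "c \<in> set (orbl c)"
  by (simp add: orbl_def words_def app_def)

lemma cluster_rot: "d \<in> cluster c \<Longrightarrow> rot i d \<in> cluster c"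
  using cluster.step[of d c i "crd i d"] by (simp add: qturn_rot)

lemma app_cluster: "app w c \<in> cluster c"
  by (induction w) (auto simp: app_def intro: cluster.base cluster_rot)

lemma cluster_eq: "cluster c = set (orbl c)"
proof
  show "cluster c \<subseteq> set (orbl c)"
  proof
    fix d assume "d \<in> cluster c"
    then show "d \<in> set (orbl c)"
      by induction (auto simp: orbl_base qturn_rot inv_qturn intro: orbl_closed)
  qed
  show "set (orbl c) \<subseteq> cluster c"
    by (auto simp: orbl_def app_cluster)
qed

lemma finite_cluster: "finite (cluster c)"
  by (simp add: cluster_eq)

lemma finite_cl_sub: "finite {d \<in> cluster c. P d}"
  using finite_cluster[of c] by simp

lemma cell_cases:
  assumes "c \<in> cells" "\<not> center_cell c"
  obtains (xp) y z where "c = (PInf, y, z)" "\<not> is_inf y" "\<not> is_inf z" "\<not> (y = Zero \<and> z = Zero)"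
  | (xm) y z where "c = (MInf, y, z)" "\<not> is_inf y" "\<not> is_inf z" "\<not> (y = Zero \<and> z = Zero)"
  | (yp) x z where "c = (x, PInf, z)" "\<not> is_inf x" "\<not> is_inf z" "\<not> (x = Zero \<and> z = Zero)"
  | (ym) x z where "c = (x, MInf, z)" "\<not> is_inf x" "\<not> is_inf z" "\<not> (x = Zero \<and> z = Zero)"
  | (zp) x y where "c = (x, y, PInf)" "\<not> is_inf x" "\<not> is_inf y" "\<not> (x = Zero \<and> y = Zero)"
  | (zm) x y where "c = (x, y, MInf)" "\<not> is_inf x" "\<not> is_inf y" "\<not> (x = Zero \<and> y = Zero)"
  using assms unfolding cells_def center_cell_def is_inf_def
  by (cases c) auto

lemma distinct_orbl:
  assumes "c \<in> cells" "\<not> center_cell c"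
  shows "distinct (orbl c)"
  using assms
proof (cases rule: cell_cases)
  case (xp y z) then show ?thesis by (cases "y = Zero"; cases "z = Zero") (auto simp add: orbl_def words_def app_def is_inf_def)
next
  case (xm y z) then show ?thesis by (cases "y = Zero"; cases "z = Zero") (auto simp add: orbl_def words_def app_def is_inf_def)
next
  case (yp y z) then show ?thesis by (cases "y = Zero"; cases "z = Zero") (auto simp add: orbl_def words_def app_def is_inf_def)
next
  case (ym y z) then show ?thesis by (cases "y = Zero"; cases "z = Zero") (auto simp add: orbl_def words_def app_def is_inf_def)
next
  case (zp y z) then show ?thesis by (cases "y = Zero"; cases "z = Zero") (auto simp add: orbl_def words_def app_def is_inf_def)
next
  case (zm y z) then show ?thesis by (cases "y = Zero"; cases "z = Zero") (auto simp add: orbl_def words_def app_def is_inf_def)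
qed

lemma card_cluster:
  assumes "c \<in> cells" "\<not> center_cell c"
  shows "card (cluster c) = 24"
  using distinct_card[OF distinct_orbl[OF assms]] by (simp add: cluster_eq orbl_def words_def)

lemma solved_count:
  assumes "c \<in> cells" "\<not> center_cell c"
  shows "card {d \<in> cluster c. f_solved d = Some col} \<le> 4"
proof -
  have "{d \<in> cluster c. f_solved d = Some col} = set (filter (\<lambda>d. f_solved d = Some col) (orbl c))"
    by (auto simp: cluster_eq)
  also have "card \<dots> \<le> length (filter (\<lambda>d. f_solved d = Some col) (orbl c))"
    by (rule card_length)
  also have "\<dots> \<le> 4"
    using assms
    by (cases rule: cell_cases; cases col) (simp_all add: orbl_def words_def app_def is_inf_def f_solved_def)
  finally show ?thesis .
qed

lemma rot_cells: "(rot i p \<in> cells) = (p \<in> cells)"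
  by (cases i; cases p) (auto simp: cells_def is_inf_def)

lemma app_cells: "c \<in> cells \<Longrightarrow> app w c \<in> cells"
  by (induction w) (auto simp: app_def rot_cells)

lemma cluster_cells: "c \<in> cells \<Longrightarrow> cluster c \<subseteq> cells"
  by (auto simp: cluster_eq orbl_def app_cells)

lemma succ_step:
  assumes "\<tau> \<in> basic_twists"
  shows "card {d \<in> cluster c. act \<tau> h d = Some col} \<le> card {d \<in> cluster c. h d = Some col}"
proof -
  obtain i \<alpha> k where tau: "\<tau> = qturn i \<alpha> ^^ k" using assms by (auto simp: basic_twists_def)
  have inj: "inj \<tau>" unfolding tau by (rule inj_fn[OF inj_qturn])
  have sub: "\<tau> ` cluster c \<subseteq> cluster c"
    unfolding tau
  proof (induction k)
    case 0 then show ?case by simp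
  next
    case (Suc k)
    then show ?case by (auto simp: image_subset_iff intro!: cluster.step)
  qed
  have eq: "\<tau> ` cluster c = cluster c"
    using endo_inj_surj[OF finite_cluster sub] inj by (auto intro: inj_on_subset)
  have "{d \<in> cluster c. act \<tau> h d = Some col} \<subseteq> \<tau> ` {e \<in> cluster c. h e = Some col}"
  proof
    fix d assume d: "d \<in> {d \<in> cluster c. act \<tau> h d = Some col}"
    then obtain e where e: "e \<in> cluster c" "d = \<tau> e" using eq by blast
    have "inv \<tau> d = e" using e inj by (simp add: inv_f_f)
    then show "d \<in> \<tau> ` {e \<in> cluster c. h e = Some col}" using d e by (auto simp: act_def)
  qed
  note sub2 = this
  have "card {d \<in> cluster c. act \<tau> h d = Some col} \<le> card (\<tau> ` {e \<in> cluster c. h e = Some col})"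
    by (rule card_mono[OF finite_imageI sub2]) (rule finite_cl_sub)
  also have "\<dots> \<le> card {e \<in> cluster c. h e = Some col}"
    by (rule card_image_le) (rule finite_cl_sub)
  finally show ?thesis .
qed

lemma limit_step:
  fixes F :: "'o::wellorder \<Rightarrow> 'a point \<Rightarrow> color option" and \<eta> :: 'o
  assumes lim: "\<forall>c. F \<eta> c =
           (if \<exists>v. \<exists>\<xi><\<eta>. \<forall>\<zeta>. \<xi> \<le> \<zeta> \<and> \<zeta> < \<eta> \<longrightarrow> F \<zeta> c = v
            then (THE v. \<exists>\<xi><\<eta>. \<forall>\<zeta>. \<xi> \<le> \<zeta> \<and> \<zeta> < \<eta> \<longrightarrow> F \<zeta> c = v)
            else None)"
    and IH: "\<forall>\<xi><\<eta>. card {d \<in> C. F \<xi> d = Some col} \<le> 4"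
    and fin: "finite C"
  shows "card {d \<in> C. F \<eta> d = Some col} \<le> 4"
proof -
  define S where "S = {d \<in> C. F \<eta> d = Some col}"
  have ev: "\<exists>\<xi><\<eta>. \<forall>\<zeta>. \<xi> \<le> \<zeta> \<and> \<zeta> < \<eta> \<longrightarrow> F \<zeta> d = Some col" if "d \<in> S" for d
  proof -
    have Fd: "F \<eta> d = Some col" using that by (simp add: S_def)
    have ex: "\<exists>v. \<exists>\<xi><\<eta>. \<forall>\<zeta>. \<xi> \<le> \<zeta> \<and> \<zeta> < \<eta> \<longrightarrow> F \<zeta> d = v"
    proof (rule ccontr)
      assume nex: "\<not> ?thesis"
      have eqd: "F \<eta> d = (if \<exists>v. \<exists>\<xi><\<eta>. \<forall>\<zeta>. \<xi> \<le> \<zeta> \<and> \<zeta> < \<eta> \<longrightarrow> F \<zeta> d = v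
            then (THE v. \<exists>\<xi><\<eta>. \<forall>\<zeta>. \<xi> \<le> \<zeta> \<and> \<zeta> < \<eta> \<longrightarrow> F \<zeta> d = v)
            else None)" by (rule spec[OF lim])
      have "F \<eta> d = None" by (subst eqd, rule if_not_P, rule nex)
      then show False using Fd by simp
    qed
    then obtain v \<xi>0 where v: "\<xi>0 < \<eta>" "\<forall>\<zeta>. \<xi>0 \<le> \<zeta> \<and> \<zeta> < \<eta> \<longrightarrow> F \<zeta> d = v" by blast
    have uniq: "v' = v" if "\<exists>\<xi><\<eta>. \<forall>\<zeta>. \<xi> \<le> \<zeta> \<and> \<zeta> < \<eta> \<longrightarrow> F \<zeta> d = v'" for v'
    proof -
      from that obtain \<xi>1 where x1: "\<xi>1 < \<eta>" "\<forall>\<zeta>. \<xi>1 \<le> \<zeta> \<and> \<zeta> < \<eta> \<longrightarrow> F \<zeta> d = v'" by blast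
      have m: "max \<xi>0 \<xi>1 < \<eta>" using v(1) x1(1) by (simp add: max_def)
      have "F (max \<xi>0 \<xi>1) d = v" using v(2) m max.cobounded1 by blast
      moreover have "F (max \<xi>0 \<xi>1) d = v'" using x1(2) m max.cobounded2 by blast
      ultimately show ?thesis by simp
    qed
    have "(THE v. \<exists>\<xi><\<eta>. \<forall>\<zeta>. \<xi> \<le> \<zeta> \<and> \<zeta> < \<eta> \<longrightarrow> F \<zeta> d = v) = v"
    proof (rule the_equality)
      show "\<exists>\<xi><\<eta>. \<forall>\<zeta>. \<xi> \<le> \<zeta> \<and> \<zeta> < \<eta> \<longrightarrow> F \<zeta> d = v" using v by blast
    qed (rule uniq)
    note theq = this
    have eqd2: "F \<eta> d = (if \<exists>v. \<exists>\<xi><\<eta>. \<forall>\<zeta>. \<xi> \<le> \<zeta> \<and> \<zeta> < \<eta> \<longrightarrow> F \<zeta> d = v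
            then (THE v. \<exists>\<xi><\<eta>. \<forall>\<zeta>. \<xi> \<le> \<zeta> \<and> \<zeta> < \<eta> \<longrightarrow> F \<zeta> d = v)
            else None)" by (rule spec[OF lim])
    have "F \<eta> d = v" by (subst eqd2, subst if_P[OF ex], rule theq)
    then have vc: "v = Some col" using Fd by simp
    show ?thesis using v(1) v(2) unfolding vc by blast
  qed
  show ?thesis
  proof (cases "S = {}")
    case True then show ?thesis by (simp add: S_def[symmetric])
  next
    case False
    define g where "g d = (SOME \<xi>. \<xi> < \<eta> \<and> (\<forall>\<zeta>. \<xi> \<le> \<zeta> \<and> \<zeta> < \<eta> \<longrightarrow> F \<zeta> d = Some col))" for d
    have g: "g d < \<eta> \<and> (\<forall>\<zeta>. g d \<le> \<zeta> \<and> \<zeta> < \<eta> \<longrightarrow> F \<zeta> d = Some col)" if "d \<in> S" for d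
      unfolding g_def using ev[OF that] by (rule someI_ex)
    have finS: "finite S" using fin by (simp add: S_def)
    define m where "m = Max (g ` S)"
    have m_in: "m \<in> g ` S" unfolding m_def using finS False by (intro Max_in) auto
    then have m_lt: "m < \<eta>" using g by auto
    have "S \<subseteq> {d \<in> C. F m d = Some col}"
    proof
      fix d assume d: "d \<in> S"
      have "g d \<le> m" unfolding m_def using finS d by (intro Max_ge) auto
      then have "F m d = Some col" using g[OF d] m_lt by blast
      then show "d \<in> {d \<in> C. F m d = Some col}" using d by (simp add: S_def)
    qed
    then have "card S \<le> card {d \<in> C. F m d = Some col}"
      by (intro card_mono) (use fin in auto)
    also have "\<dots> \<le> 4" using IH m_lt by blast
    finally show ?thesis by (simp add: S_def)
  qed
qed

lemma color_UNIV: "(UNIV :: color set) = {Red, White, Green, Orange, Yellow, Blue}"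
  using color.exhaust by auto

lemma run_invariant:
  fixes \<sigma> :: "'o::wellorder \<Rightarrow> 'a point \<Rightarrow> 'a point"
  assumes run: "is_run f_solved \<sigma> \<theta> F"
  shows "\<eta> \<le> \<theta> \<Longrightarrow> c \<in> cells \<Longrightarrow> \<not> center_cell c \<Longrightarrow> card {d \<in> cluster c. F \<eta> d = Some col} \<le> 4"
proof (induction \<eta> arbitrary: col rule: less_induct)
  case (less \<eta>)
  note R = run[unfolded is_run_def]
  show ?case
  proof (cases "\<exists>\<xi>. \<xi> < \<eta>")
    case False
    then have "F \<eta> = f_solved" using R less.prems(1) by blast
    then show ?thesis using solved_count less.prems by simp
  next
    case True
    show ?thesis
    proof (cases "\<exists>\<xi><\<eta>. \<forall>\<zeta>. \<not> (\<xi> < \<zeta> \<and> \<zeta> < \<eta>)")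
      case True
      then obtain \<xi> where xi: "\<xi> < \<eta>" "\<forall>\<zeta>. \<not> (\<xi> < \<zeta> \<and> \<zeta> < \<eta>)" by blast
      have Feq: "F \<eta> = act (\<sigma> \<xi>) (F \<xi>)" using R xi less.prems(1) by blast
      have tw: "\<sigma> \<xi> \<in> basic_twists" using R xi(1) less.prems(1) by auto
      have "card {d \<in> cluster c. F \<eta> d = Some col} \<le> card {d \<in> cluster c. F \<xi> d = Some col}"
        unfolding Feq by (rule succ_step[OF tw])
      also have "\<dots> \<le> 4" using less.IH[OF xi(1)] xi(1) less.prems by auto
      finally show ?thesis .
    next
      case False
      then have limit: "\<forall>\<xi><\<eta>. \<exists>\<zeta>. \<xi> < \<zeta> \<and> \<zeta> < \<eta>" by blast
      have lim: "\<forall>c. F \<eta> c =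
           (if \<exists>v. \<exists>\<xi><\<eta>. \<forall>\<zeta>. \<xi> \<le> \<zeta> \<and> \<zeta> < \<eta> \<longrightarrow> F \<zeta> c = v
            then (THE v. \<exists>\<xi><\<eta>. \<forall>\<zeta>. \<xi> \<le> \<zeta> \<and> \<zeta> < \<eta> \<longrightarrow> F \<zeta> c = v)
            else None)"
        using R less.prems(1) True limit by blast
      have IH: "\<forall>\<xi><\<eta>. card {d \<in> cluster c. F \<xi> d = Some col} \<le> 4"
        using less.IH less.prems by auto
      show ?thesis by (rule limit_step[OF lim IH finite_cluster])
    qed
  qed
qed

theorem mainTheorem9:
  fixes \<sigma> :: "'o::wellorder \<Rightarrow> 'a point \<Rightarrow> 'a point" and \<theta> :: 'o and f :: "'a config"
  assumes "infinite (UNIV :: 'a set)"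
    and "accessible_via \<sigma> \<theta> f_solved f"
    and "legal f"
  shows "\<forall>c\<in>cells. \<not> center_cell c \<longrightarrow>
           (\<forall>col. card {d \<in> cluster c. f d = Some col} = 4)"
proof (intro ballI impI allI)
  fix c :: "'a point" and col assume c: "c \<in> cells" "\<not> center_cell c"
  obtain F where run: "is_run f_solved \<sigma> \<theta> F" and Fth: "\<forall>c\<in>cells. F \<theta> c = f c"
    using assms(2) by (auto simp: accessible_via_def)
  have sub: "cluster c \<subseteq> cells" by (rule cluster_cells[OF c(1)])
  define A where "A col = {d \<in> cluster c. f d = Some col}" for col
  have le: "card (A col') \<le> 4" for col'
  proof -
    have "A col' = {d \<in> cluster c. F \<theta> d = Some col'}" using sub Fth by (auto simp: A_def)
    then show ?thesis using run_invariant[OF run order_refl c] by simp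
  qed
  have un: "cluster c = (\<Union>col'\<in>UNIV. A col')"
    using sub assms(3) by (auto simp: A_def legal_def)
  have "card (cluster c) = (\<Sum>col'\<in>UNIV. card (A col'))"
    unfolding un
    by (rule card_UN_disjoint) (auto simp: color_UNIV A_def finite_cl_sub)
  then have sum: "24 = (\<Sum>col'\<in>UNIV. card (A col'))" using card_cluster[OF c] by simp
  have "card (A col) = 4"
    using sum le[of Red] le[of White] le[of Green] le[of Orange] le[of Yellow] le[of Blue]
    by (cases col) (simp_all add: color_UNIV)
  then show "card {d \<in> cluster c. f d = Some col} = 4" by (simp add: A_def)
qed

end
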